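(* Let $\mathcal{H}$ be a complex Hilbert space and $T\in\mathbb{B}(\mathcal{H})$. Then \[ \|T+TT^*T\|=\|T\|+\|T\|^3 . \] Moreover, if $T\neq 0$ and either $\operatorname{dist}(T,\mathbb{K}(\mathcal{H}))<\|T\|$ or $\operatorname{dist}(TT^*T,\mathbb{K}(\mathcal{H}))<\|TT^*T\|$, then there exists a unit vector $x_o\in\mathcal{H}$ such that \[ \frac{T}{\|T\|}x_o=\frac{TT^*T}{\|TT^*T\|}x_o,\qquad \|Tx_o\|=\|T\|,\qquad \|TT^*Tx_o\|=\|TT^*T\|. \]
   Context: $\mathbb{B}(\mathcal{H})$ denotes the $C^*$-algebra of bounded linear operators on $\mathcal{H}$ with the operator norm, $\mathbb{K}(\mathcal{H})$ the ideal of compact operators, and $\operatorname{dist}(S,\mathbb{K}(\mathcal{H}))=\inf\{\|S-K\|:K\in\mathbb{K}(\mathcal{H})\}$. *)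

theory Defs
  imports "HOL-Analysis.Analysis"
begin

class complex_vector = real_vector +
  fixes scaleC :: "complex \<Rightarrow> 'a \<Rightarrow> 'a" (infixr \<open>*\<^sub>C\<close> 75)
  assumes scaleC_add_right: "a *\<^sub>C (x + y) = a *\<^sub>C x + a *\<^sub>C y"
    and scaleC_add_left: "(a + b) *\<^sub>C x = a *\<^sub>C x + b *\<^sub>C x"
    and scaleC_scaleC: "a *\<^sub>C (b *\<^sub>C x) = (a * b) *\<^sub>C x"
    and scaleC_one: "1 *\<^sub>C x = x"
    and scaleR_scaleC: "scaleR r x = (complex_of_real r) *\<^sub>C x"

class complex_inner = complex_vector + real_normed_vector +
  fixes cinner :: "'a \<Rightarrow> 'a \<Rightarrow> complex"
  assumes cinner_commute: "cinner x y = cnj (cinner y x)"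
    and cinner_add_left: "cinner (x + y) z = cinner x z + cinner y z"
    and cinner_scaleC_left: "cinner (a *\<^sub>C x) y = cnj a * cinner x y"
    and cinner_self_real: "Im (cinner x x) = 0"
    and cinner_self_nonneg: "0 \<le> Re (cinner x x)"
    and cinner_self_eq_zero: "cinner x x = 0 \<longleftrightarrow> x = 0"
    and norm_eq_sqrt_cinner: "norm x = sqrt (Re (cinner x x))"

class chilbert_space = complex_inner + complete_space

definition clinear :: "('a::complex_vector \<Rightarrow> 'b::complex_vector) \<Rightarrow> bool" where
  "clinear f \<longleftrightarrow> (\<forall>x y. f (x + y) = f x + f y) \<and> (\<forall>c x. f (c *\<^sub>C x) = c *\<^sub>C f x)"

text \<open>Elements of \<open>\<bbbB>(H)\<close>: complex-linear bounded maps; their operator norm is \<open>onorm\<close>.\<close>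
definition bounded_clinear :: "('a::{complex_vector,real_normed_vector} \<Rightarrow> 'b::{complex_vector,real_normed_vector}) \<Rightarrow> bool" where
  "bounded_clinear f \<longleftrightarrow> clinear f \<and> bounded_linear f"

definition cadjoint :: "('a::complex_inner \<Rightarrow> 'a) \<Rightarrow> ('a \<Rightarrow> 'a)" where
  "cadjoint T = (THE S. \<forall>x y. cinner (T x) y = cinner x (S y))"

definition compact_op :: "('a::complex_inner \<Rightarrow> 'a) \<Rightarrow> bool" where
  "compact_op K \<longleftrightarrow> bounded_clinear K \<and> compact (closure (K ` cball 0 1))"

definition dist_compact :: "('a::complex_inner \<Rightarrow> 'a) \<Rightarrow> real" where
  "dist_compact S = Inf {onorm (\<lambda>x. S x - K x) | K. compact_op K}"

end

theory Submission
  imports Defs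
begin


lemma cinner_add_right: "cinner x (y + z) = cinner x y + cinner x z"
  by (metis cinner_commute cinner_add_left complex_cnj_add)
lemma cinner_scaleC_right: "cinner x (a *\<^sub>C y) = a * cinner x y"
  by (metis cinner_commute cinner_scaleC_left complex_cnj_mult complex_cnj_cnj)
lemma cinner_zero_left[simp]: "cinner 0 y = 0"
  using cinner_add_left[of 0 0 y] by simp
lemma cinner_zero_right[simp]: "cinner x 0 = 0"
  using cinner_add_right[of x 0 0] by simp
lemma cinner_minus_left: "cinner (- x) y = - cinner x y"
proof -
  have "cinner x y + cinner (- x) y = 0" using cinner_add_left[of x "-x" y] by simp
  then show ?thesis using add_eq_0_iff[of "cinner x y" "cinner (- x) y"] by blast
qed
lemma cinner_minus_right: "cinner x (- y) = - cinner x y"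
proof -
  have "cinner x y + cinner x (- y) = 0" using cinner_add_right[of x y "-y"] by simp
  then show ?thesis using add_eq_0_iff[of "cinner x y" "cinner x (- y)"] by blast
qed
lemma cinner_diff_left: "cinner (x - y) z = cinner x z - cinner y z"
  using cinner_add_left[of x "-y" z] by (simp add: cinner_minus_left)
lemma cinner_diff_right: "cinner x (y - z) = cinner x y - cinner x z"
  using cinner_add_right[of x y "-z"] by (simp add: cinner_minus_right)
lemma cinner_scaleR_left: "cinner (r *\<^sub>R x) y = complex_of_real r * cinner x y"
  by (simp add: scaleR_scaleC cinner_scaleC_left)
lemma cinner_scaleR_right: "cinner x (r *\<^sub>R y) = complex_of_real r * cinner x y"
  by (simp add: scaleR_scaleC cinner_scaleC_right)
lemma norm_sq: "(norm x)^2 = Re (cinner x x)"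
  by (simp add: norm_eq_sqrt_cinner cinner_self_nonneg)
lemma cinner_self: "cinner x x = complex_of_real ((norm x)^2)"
  by (simp add: norm_sq complex_eq_iff cinner_self_real)
lemma Re_cinner_commute: "Re (cinner y x) = Re (cinner x y)"
  by (subst cinner_commute) simp
lemma norm_add_sq: "(norm (x + y))^2 = (norm x)^2 + (norm y)^2 + 2 * Re (cinner x y)"
  by (simp add: norm_sq cinner_add_left cinner_add_right Re_cinner_commute[of y x])
lemma norm_diff_sq: "(norm (x - y))^2 = (norm x)^2 + (norm y)^2 - 2 * Re (cinner x y)"
  by (simp add: norm_sq cinner_diff_left cinner_diff_right Re_cinner_commute[of y x])
lemma Re_cinner_le: "Re (cinner x y) \<le> norm x * norm y"
proof (cases "x = 0 \<or> y = 0")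
  case True then show ?thesis by auto
next
  case False
  define s where "s = norm y"
  define t where "t = norm x"
  have st: "s > 0" "t > 0" using False by (auto simp: s_def t_def)
  have "0 \<le> (norm (s *\<^sub>R x - t *\<^sub>R y))^2" by simp
  also have "\<dots> = s^2 * t^2 + t^2 * s^2 - 2 * (s * t) * Re (cinner x y)"
    by (simp add: norm_diff_sq cinner_scaleR_left cinner_scaleR_right power_mult_distrib s_def t_def
        abs_mult)
  finally have "2 * (s * t) * Re (cinner x y) \<le> 2 * (s * t) * (t * s)"
    by (simp add: power2_eq_square algebra_simps)
  then have "Re (cinner x y) \<le> t * s" using st by simp
  then show ?thesis by (simp add: s_def t_def)
qed
lemma norm_scaleC: "norm (c *\<^sub>C (x::'a::complex_inner)) = cmod c * norm x"
proof -
  have cc: "cnj c * c = complex_of_real ((cmod c)^2)"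
    by (metis complex_norm_square mult.commute of_real_power)
  have "cinner (c *\<^sub>C x) (c *\<^sub>C x) = (cnj c * c) * cinner x x"
    by (simp add: cinner_scaleC_left cinner_scaleC_right)
  also have "\<dots> = complex_of_real ((cmod c * norm x)^2)"
    unfolding cc by (simp add: cinner_self power_mult_distrib)
  finally have "(norm (c *\<^sub>C x))^2 = (cmod c * norm x)^2"
    by (simp add: norm_sq)
  then show ?thesis by (rule power2_eq_imp_eq) auto
qed
lemma cinner_CS: "cmod (cinner x y) \<le> norm x * norm y"
proof (cases "cinner x y = 0")
  case True then show ?thesis by simp
next
  case False
  define c where "c = cinner x y"
  define u where "u = cnj c / complex_of_real (cmod c)"
  have u1: "cmod u = 1" using False by (simp add: u_def c_def norm_divide)
  have cc: "cnj c * c = complex_of_real ((cmod c)^2)"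
    by (metis complex_norm_square mult.commute of_real_power)
  have c0: "cmod c \<noteq> 0" using False by (simp add: c_def)
  have "cinner x (u *\<^sub>C y) = u * c" by (simp add: cinner_scaleC_right c_def)
  also have "u * c = cnj c * c / complex_of_real (cmod c)" by (simp add: u_def)
  also have "\<dots> = complex_of_real (cmod c)" unfolding cc using c0
    by (simp add: power2_eq_square)
  finally have "cinner x (u *\<^sub>C y) = complex_of_real (cmod c)" .
  then have "cmod c = Re (cinner x (u *\<^sub>C y))" by simp
  also have "\<dots> \<le> norm x * norm y" using Re_cinner_le[of x "u *\<^sub>C y"] by (simp add: norm_scaleC u1)
  finally show ?thesis by (simp add: c_def)
qed
lemma cinner_ext: "(\<And>x. cinner x a = cinner x b) \<Longrightarrow> a = b"
proof -
  assume h: "\<And>x. cinner x a = cinner x b"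
  have "cinner (a - b) (a - b) = 0" by (simp add: cinner_diff_right h)
  then show ?thesis by (metis cinner_self_eq_zero eq_iff_diff_eq_0)
qed
lemma scaleC_zero_right[simp]: "c *\<^sub>C (0::'a::complex_vector) = 0"
  using scaleC_add_right[of c 0 0] by simp


lemma orth_of_min:
  fixes w n :: "'a::complex_inner"
  assumes "\<And>t. norm w \<le> norm (w + (t::real) *\<^sub>R n)"
  shows "Re (cinner w n) = 0"
proof (rule ccontr)
  assume ne: "Re (cinner w n) \<noteq> 0"
  then have "n \<noteq> 0" by auto
  define r where "r = Re (cinner w n)"
  define s where "s = (norm n)^2"
  have s: "s > 0" using \<open>n \<noteq> 0\<close> by (simp add: s_def)
  define t where "t = - r / s"
  have "(norm w)^2 \<le> (norm (w + t *\<^sub>R n))^2"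
    using assms[of t] by (simp add: power_mono)
  also have "\<dots> = (norm w)^2 + t^2 * s + 2 * t * r"
    by (simp add: norm_add_sq cinner_scaleR_right s_def r_def power_mult_distrib)
  finally have "0 \<le> t^2 * s + 2 * t * r" by simp
  also have "t^2 * s + 2 * t * r = - (r^2 / s)"
    using s by (simp add: t_def power2_eq_square field_simps)
  finally have "r^2 / s \<le> 0" by simp
  then have "r^2 \<le> 0" using s by (simp add: divide_le_0_iff)
  then have "r = 0" by simp
  then show False using ne r_def by simp
qed

lemma riesz:
  fixes f :: "'a::chilbert_space \<Rightarrow> complex"
  assumes bl: "bounded_linear f" and hom: "\<And>c x. f (c *\<^sub>C x) = c * f x"
  shows "\<exists>z. \<forall>x. f x = cinner z x"
proof (cases "\<forall>x. f x = 0")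
  case True then show ?thesis by (intro exI[of _ 0]) simp
next
  case False
  interpret f: bounded_linear f by fact
  obtain v where v: "f v \<noteq> 0" using False by auto
  define M where "M = {x. f x = 1}"
  have v0: "(1 / f v) *\<^sub>C v \<in> M" using v by (simp add: M_def hom)
  define \<delta> where "\<delta> = Inf (norm ` M)"
  have bdd: "bdd_below (norm ` M)" by (rule bdd_belowI[of _ 0]) auto
  have low: "\<And>x. x \<in> M \<Longrightarrow> \<delta> \<le> norm x"
    unfolding \<delta>_def using bdd by (simp add: cInf_lower)
  have d0: "0 \<le> \<delta>" unfolding \<delta>_def using v0 by (intro cInf_greatest) auto
  have "\<forall>n. \<exists>x\<in>M. norm x < \<delta> + inverse (real (Suc n))"
  proof
    fix n
    have "Inf (norm ` M) < \<delta> + inverse (real (Suc n))" by (simp add: \<delta>_def)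
    then show "\<exists>x\<in>M. norm x < \<delta> + inverse (real (Suc n))"
      using cInf_lessD[of "norm ` M"] v0 by blast
  qed
  then obtain xs where xsM: "\<And>n. xs n \<in> M" and xsn: "\<And>n. norm (xs n) < \<delta> + inverse (real (Suc n))"
    by metis
  have mid: "2 * \<delta> \<le> norm (x + y)" if "x \<in> M" "y \<in> M" for x y
  proof -
    have "(1/2) *\<^sub>R (x + y) \<in> M" using that
      by (simp add: M_def f.scaleR f.add scaleR_conv_of_real)
    then have "\<delta> \<le> norm ((1/2) *\<^sub>R (x + y))" by (rule low)
    then show ?thesis by simp
  qed
  have par: "(norm (x - y))^2 \<le> 2 * (norm x)^2 + 2 * (norm y)^2 - 4 * \<delta>^2" if "x \<in> M" "y \<in> M" for x y
  proof -
    have "(2 * \<delta>)^2 \<le> (norm (x + y))^2" using mid[OF that] d0 by (intro power_mono) auto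
    moreover have "(norm (x - y))^2 = 2 * (norm x)^2 + 2 * (norm y)^2 - (norm (x + y))^2"
      by (simp add: norm_add_sq norm_diff_sq)
    ultimately show ?thesis by (simp add: power_mult_distrib)
  qed
  have sqb: "(norm (xs n))^2 \<le> \<delta>^2 + (2*\<delta>+1) * inverse (real (Suc N))" if "N \<le> n" for n N
  proof -
    define h where "h = inverse (real (Suc N))"
    have h: "0 < h" "h \<le> 1" by (auto simp: h_def inverse_le_1_iff)
    have "inverse (real (Suc n)) \<le> h" unfolding h_def using that by (simp add: le_imp_inverse_le)
    then have "norm (xs n) \<le> \<delta> + h" using xsn[of n] by simp
    then have "(norm (xs n))^2 \<le> (\<delta> + h)^2" by (simp add: power_mono)
    also have "\<dots> = \<delta>^2 + (2*\<delta> + h) * h" by (simp add: power2_eq_square algebra_simps)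
    also have "\<dots> \<le> \<delta>^2 + (2*\<delta>+1) * h" using h by (intro add_left_mono mult_right_mono) auto
    finally show ?thesis by (simp add: h_def)
  qed
  have "Cauchy xs"
  proof (rule metric_CauchyI)
    fix e :: real assume e: "0 < e"
    obtain N where N: "(8*\<delta>+4) / e^2 < real N"
      using reals_Archimedean2 by blast
    have e2: "0 < e^2" using e by simp
    have "8*\<delta>+4 < e^2 * real N"
      using N e2 by (simp add: divide_less_eq mult.commute)
    also have "\<dots> \<le> e^2 * real (Suc N)" using e2 by simp
    finally have "8*\<delta>+4 < e^2 * real (Suc N)" .
    then have "(8*\<delta>+4) / real (Suc N) < e^2"
      by (simp add: divide_less_eq mult.commute del: of_nat_Suc)
    then have "(8*\<delta>+4) * inverse (real (Suc N)) < e^2" by (simp add: divide_inverse del: of_nat_Suc)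
    then have key: "4 * ((2*\<delta>+1) * inverse (real (Suc N))) < e^2" by (simp add: algebra_simps)
    show "\<exists>M. \<forall>m\<ge>M. \<forall>n\<ge>M. dist (xs m) (xs n) < e"
    proof (intro exI allI impI)
      fix m n assume mn: "N \<le> m" "N \<le> n"
      have "(norm (xs m - xs n))^2 \<le> 2 * (norm (xs m))^2 + 2 * (norm (xs n))^2 - 4 * \<delta>^2"
        by (rule par[OF xsM xsM])
      also have "\<dots> \<le> 4 * ((2*\<delta>+1) * inverse (real (Suc N)))"
        using sqb[OF mn(1)] sqb[OF mn(2)] by simp
      finally have "(norm (xs m - xs n))^2 < e^2" using key by simp
      then have "norm (xs m - xs n) < e" using e by (simp add: power_less_imp_less_base)
      then show "dist (xs m) (xs n) < e" by (simp add: dist_norm)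
    qed
  qed
  then obtain w where w: "xs \<longlonglongrightarrow> w" using Cauchy_convergent_iff convergent_def by blast
  have "(\<lambda>n. f (xs n)) \<longlonglongrightarrow> f w" using w by (rule f.tendsto)
  moreover have "(\<lambda>n. f (xs n)) = (\<lambda>n. 1)" using xsM by (auto simp: M_def)
  ultimately have fw: "f w = 1" using LIMSEQ_unique tendsto_const by metis
  have "norm w \<le> \<delta>"
  proof (rule tendsto_le[OF _ _ tendsto_norm[OF w]])
    show "sequentially \<noteq> bot" by simp
    show "(\<lambda>n. \<delta> + inverse (real (Suc n))) \<longlonglongrightarrow> \<delta>"
      using tendsto_add[OF tendsto_const LIMSEQ_inverse_real_of_nat] by simp
    show "\<forall>\<^sub>F n in sequentially. norm (xs n) \<le> \<delta> + inverse (real (Suc n))"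
      using xsn by (simp add: less_imp_le)
  qed
  then have wmin: "\<And>x. x \<in> M \<Longrightarrow> norm w \<le> norm x" using low by force
  have orth: "cinner w n = 0" if "f n = 0" for n
  proof -
    have r1: "Re (cinner w n) = 0"
      by (rule orth_of_min, rule wmin) (simp add: M_def f.add f.scaleR fw that)
    have "f (\<i> *\<^sub>C n) = 0" by (simp add: hom that)
    then have "Re (cinner w (\<i> *\<^sub>C n)) = 0"
      by (intro orth_of_min wmin) (simp add: M_def f.add f.scaleR fw)
    then have "Im (cinner w n) = 0" by (simp add: cinner_scaleC_right)
    with r1 show ?thesis by (simp add: complex_eq_iff)
  qed
  have w0: "w \<noteq> 0" using fw f.zero by auto
  have "\<forall>x. f x = cinner ((1 / (norm w)^2) *\<^sub>R w) x"
  proof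
    fix x
    have "f (x - f x *\<^sub>C w) = 0" by (simp add: f.diff hom fw)
    then have "cinner w (x - f x *\<^sub>C w) = 0" by (rule orth)
    then have "cinner w x = f x * complex_of_real ((norm w)^2)"
      by (simp add: cinner_diff_right cinner_scaleC_right cinner_self)
    then show "f x = cinner ((1 / (norm w)^2) *\<^sub>R w) x"
      using w0 by (simp add: cinner_scaleR_left field_simps)
  qed
  then show ?thesis by blast
qed




lemma adjoint_exists:
  fixes T :: "'a::chilbert_space \<Rightarrow> 'a"
  assumes "bounded_clinear T"
  shows "\<exists>S. \<forall>x y. cinner (T x) y = cinner x (S y)"
proof -
  have cl: "clinear T" and bl: "bounded_linear T" using assms by (auto simp: bounded_clinear_def)
  interpret T: bounded_linear T by fact
  have "\<forall>y. \<exists>z. \<forall>x. cinner y (T x) = cinner z x"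
  proof
    fix y
    show "\<exists>z. \<forall>x. cinner y (T x) = cinner z x"
    proof (rule riesz)
      show "bounded_linear (\<lambda>x. cinner y (T x))"
      proof (rule bounded_linear_intro[where K = "norm y * onorm T"])
        show "cinner y (T (a + b)) = cinner y (T a) + cinner y (T b)" for a b
          by (simp add: T.add cinner_add_right)
        show "cinner y (T (r *\<^sub>R a)) = r *\<^sub>R cinner y (T a)" for r a
          by (simp add: T.scaleR cinner_scaleR_right scaleR_conv_of_real)
        show "norm (cinner y (T a)) \<le> norm a * (norm y * onorm T)" for a
        proof -
          have "norm (cinner y (T a)) \<le> norm y * norm (T a)" using cinner_CS[of y "T a"] by simp
          also have "\<dots> \<le> norm y * (onorm T * norm a)" using onorm[OF bl] by (simp add: mult_left_mono)
          finally show ?thesis by (simp add: algebra_simps)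
        qed
      qed
      show "cinner y (T (c *\<^sub>C x)) = c * cinner y (T x)" for c x
        using cl by (simp add: clinear_def cinner_scaleC_right)
    qed
  qed
  then obtain S where S: "\<And>y x. cinner y (T x) = cinner (S y) x" by metis
  have "cinner (T x) y = cinner x (S y)" for x y
    by (metis S cinner_commute)
  then show ?thesis by blast
qed

lemma cadjoint_prop:
  fixes T :: "'a::chilbert_space \<Rightarrow> 'a"
  assumes "bounded_clinear T"
  shows "cinner (T x) y = cinner x (cadjoint T y)"
proof -
  obtain S where S: "\<forall>x y. cinner (T x) y = cinner x (S y)" using adjoint_exists[OF assms] by blast
  have "cadjoint T = S"
    unfolding cadjoint_def
  proof (rule the_equality)
    show "\<forall>x y. cinner (T x) y = cinner x (S y)" by fact
    fix S' assume S': "\<forall>x y. cinner (T x) y = cinner x (S' y)"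
    show "S' = S"
    proof
      fix y show "S' y = S y" by (rule cinner_ext) (metis S S')
    qed
  qed
  then show ?thesis using S by simp
qed

lemma cadjoint_bounded:
  fixes T :: "'a::chilbert_space \<Rightarrow> 'a"
  assumes T: "bounded_clinear T"
  shows "bounded_clinear (cadjoint T)" and "onorm (cadjoint T) \<le> onorm T"
proof -
  define S where "S = cadjoint T"
  have adj: "\<And>x y. cinner (T x) y = cinner x (S y)" unfolding S_def by (rule cadjoint_prop[OF T])
  have bl: "bounded_linear T" using T by (simp add: bounded_clinear_def)
  have add: "S (a + b) = S a + S b" for a b
    by (rule cinner_ext) (simp add: adj[symmetric] cinner_add_right)
  have sc: "S (c *\<^sub>C a) = c *\<^sub>C S a" for c a
    by (rule cinner_ext) (simp add: adj[symmetric] cinner_scaleC_right)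
  have bnd: "norm (S y) \<le> onorm T * norm y" for y
  proof (cases "S y = 0")
    case True then show ?thesis using onorm_pos_le[OF bl] by simp
  next
    case False
    have "(norm (S y))^2 = Re (cinner (T (S y)) y)" by (simp add: adj norm_sq)
    also have "\<dots> \<le> cmod (cinner (T (S y)) y)" by (rule complex_Re_le_cmod)
    also have "\<dots> \<le> norm (T (S y)) * norm y" by (rule cinner_CS)
    also have "\<dots> \<le> onorm T * norm (S y) * norm y"
      using onorm[OF bl] by (simp add: mult_right_mono)
    finally have "norm (S y) * norm (S y) \<le> (onorm T * norm y) * norm (S y)"
      by (simp add: power2_eq_square algebra_simps)
    then show ?thesis using False by simp
  qed
  have blS: "bounded_linear S"
  proof (rule bounded_linear_intro[where K = "onorm T"])
    show "S (a + b) = S a + S b" for a b by (rule add)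
    show "S (r *\<^sub>R a) = r *\<^sub>R S a" for r a by (simp add: scaleR_scaleC sc)
    show "norm (S a) \<le> norm a * onorm T" for a using bnd[of a] by (simp add: mult.commute)
  qed
  show "bounded_clinear (cadjoint T)"
    unfolding S_def[symmetric] bounded_clinear_def clinear_def using blS add sc by simp
  show "onorm (cadjoint T) \<le> onorm T"
    unfolding S_def[symmetric] by (rule onorm_bound[OF onorm_pos_le[OF bl] bnd])
qed

lemma approx_eig:
  fixes R :: "'a::chilbert_space \<Rightarrow> 'a" and y :: "nat \<Rightarrow> 'a"
  assumes R: "bounded_clinear R" and y1: "\<And>n. norm (y n) = 1"
    and lim: "(\<lambda>n. norm (R (y n))) \<longlonglongrightarrow> onorm R"
  shows "(\<lambda>n. cadjoint R (R (y n)) - (onorm R)^2 *\<^sub>R y n) \<longlonglongrightarrow> 0"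
proof -
  define Rs where "Rs = cadjoint R"
  define b where "b = (onorm R)^2"
  have bl: "bounded_linear R" using R by (simp add: bounded_clinear_def)
  have blS: "bounded_linear Rs" and nS: "onorm Rs \<le> onorm R"
    using cadjoint_bounded[OF R] by (auto simp: Rs_def bounded_clinear_def)
  have adj: "\<And>x z. cinner (R x) z = cinner x (Rs z)" unfolding Rs_def by (rule cadjoint_prop[OF R])
  have o0: "0 \<le> onorm R" by (rule onorm_pos_le[OF bl])
  have b0: "0 \<le> b" by (simp add: b_def)
  have bound: "(norm (Rs (R v) - b *\<^sub>R v))^2 \<le> 2*b^2 - 2*b*(norm (R v))^2" if v: "norm v = 1" for v
  proof -
    have "norm (Rs (R v)) \<le> onorm Rs * norm (R v)" by (rule onorm[OF blS])
    also have "\<dots> \<le> onorm R * norm (R v)" using nS by (simp add: mult_right_mono)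
    also have "\<dots> \<le> onorm R * onorm R"
      using onorm[OF bl, of v] v o0 by (simp add: mult_left_mono)
    finally have n1: "norm (Rs (R v)) \<le> b" by (simp add: b_def power2_eq_square)
    then have n2: "(norm (Rs (R v)))^2 \<le> b^2" by (simp add: power_mono)
    have re: "Re (cinner (Rs (R v)) (b *\<^sub>R v)) = b * (norm (R v))^2"
    proof -
      have "Re (cinner (Rs (R v)) (b *\<^sub>R v)) = b * Re (cinner (Rs (R v)) v)"
        by (simp add: cinner_scaleR_right)
      also have "Re (cinner (Rs (R v)) v) = Re (cinner v (Rs (R v)))" by (rule Re_cinner_commute)
      also have "\<dots> = (norm (R v))^2" by (simp add: adj[symmetric] norm_sq)
      finally show ?thesis .
    qed
    have "(norm (Rs (R v) - b *\<^sub>R v))^2 = (norm (Rs (R v)))^2 + b^2 - 2 * (b * (norm (R v))^2)"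
      by (simp add: norm_diff_sq re v b0)
    then show ?thesis using n2 by simp
  qed
  have "(\<lambda>n. Rs (R (y n)) - b *\<^sub>R y n) \<longlonglongrightarrow> 0"
  proof (rule Lim_null_comparison)
    show "\<forall>\<^sub>F n in sequentially. norm (Rs (R (y n)) - b *\<^sub>R y n) \<le> sqrt (2*b^2 - 2*b*(norm (R (y n)))^2)"
      using bound y1 by (intro always_eventually allI real_le_rsqrt) auto
    have "(\<lambda>n. sqrt (2*b^2 - 2*b*(norm (R (y n)))^2)) \<longlonglongrightarrow> sqrt (2*b^2 - 2*b*(onorm R)^2)"
      by (intro tendsto_intros lim)
    moreover have "2*b^2 - 2*b*(onorm R)^2 = 0" by (simp add: b_def power2_eq_square)
    ultimately show "(\<lambda>n. sqrt (2*b^2 - 2*b*(norm (R (y n)))^2)) \<longlonglongrightarrow> 0"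
      by simp
  qed
  then show ?thesis by (simp add: Rs_def b_def)
qed

lemma norm_approx_seq:
  fixes R :: "'a::real_normed_vector \<Rightarrow> 'b::real_normed_vector"
  assumes bl: "bounded_linear R" and pos: "0 < onorm R"
  shows "\<exists>y. (\<forall>n. norm (y n) = 1) \<and> (\<lambda>n. norm (R (y n))) \<longlonglongrightarrow> onorm R"
proof -
  interpret R: bounded_linear R by fact
  have "\<exists>x. norm x = 1 \<and> onorm R - inverse (real (Suc n)) < norm (R x)" for n
  proof (rule ccontr)
    define e where "e = inverse (real (Suc n))"
    have e: "0 < e" by (simp add: e_def)
    assume "\<not> ?thesis"
    then have h: "\<And>x. norm x = 1 \<Longrightarrow> norm (R x) \<le> onorm R - e" by (auto simp: e_def not_less)
    have "norm (R x) \<le> max 0 (onorm R - e) * norm x" for x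
    proof (cases "x = 0")
      case True then show ?thesis by (simp add: R.zero)
    next
      case False
      define u where "u = (1 / norm x) *\<^sub>R x"
      have u: "norm u = 1" using False by (simp add: u_def)
      have x: "x = norm x *\<^sub>R u" using False by (simp add: u_def)
      have "norm (R x) = norm x * norm (R u)" by (subst x) (simp add: R.scaleR)
      also have "\<dots> \<le> norm x * max 0 (onorm R - e)" using h[OF u] by (intro mult_left_mono) auto
      finally show ?thesis by (simp add: mult.commute)
    qed
    then have "onorm R \<le> max 0 (onorm R - e)" by (intro onorm_bound) auto
    then show False using pos e by simp
  qed
  then obtain y where y: "\<And>n. norm (y n) = 1" "\<And>n. onorm R - inverse (real (Suc n)) < norm (R (y n))"
    by metis
  have "(\<lambda>n. norm (R (y n))) \<longlonglongrightarrow> onorm R"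
  proof (rule tendsto_sandwich[of "\<lambda>n. onorm R - inverse (real (Suc n))" _ _ "\<lambda>n. onorm R"])
    show "\<forall>\<^sub>F n in sequentially. onorm R - inverse (real (Suc n)) \<le> norm (R (y n))"
      using y(2) by (simp add: less_imp_le)
    show "\<forall>\<^sub>F n in sequentially. norm (R (y n)) \<le> onorm R"
    proof (intro always_eventually allI)
      fix n show "norm (R (y n)) \<le> onorm R" using onorm[OF bl, of "y n"] y(1)[of n] by simp
    qed
    show "(\<lambda>n. onorm R - inverse (real (Suc n))) \<longlonglongrightarrow> onorm R"
      using tendsto_diff[OF tendsto_const LIMSEQ_inverse_real_of_nat] by simp
  qed simp
  then show ?thesis using y(1) by blast
qed

lemma conv_sub:
  fixes R K :: "'a::chilbert_space \<Rightarrow> 'a" and y :: "nat \<Rightarrow> 'a"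
  assumes R: "bounded_clinear R" and K: "compact_op K"
    and less: "onorm (\<lambda>x. R x - K x) < onorm R"
    and y1: "\<And>n. norm (y n) = 1" and lim: "(\<lambda>n. norm (R (y n))) \<longlonglongrightarrow> onorm R"
  shows "\<exists>x r. strict_mono r \<and> (y \<circ> r) \<longlonglongrightarrow> x"
proof -
  define Rs where "Rs = cadjoint R"
  define b where "b = (onorm R)^2"
  define c where "c = onorm (\<lambda>x. R x - K x)"
  have bl: "bounded_linear R" using R by (simp add: bounded_clinear_def)
  have blK: "bounded_linear K" using K by (simp add: compact_op_def bounded_clinear_def)
  have blD: "bounded_linear (\<lambda>x. R x - K x)" using bl blK by (rule bounded_linear_sub)
  have blS: "bounded_linear Rs" and nS: "onorm Rs \<le> onorm R"
    using cadjoint_bounded[OF R] by (auto simp: Rs_def bounded_clinear_def)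
  interpret Rs: bounded_linear Rs by fact
  have c0: "0 \<le> c" unfolding c_def by (rule onorm_pos_le[OF blD])
  have o0: "0 < onorm R" using less c0 c_def by simp
  have db: "onorm R * c < b" using o0 less by (simp add: b_def c_def power2_eq_square)
  have app: "(\<lambda>n. Rs (R (y n)) - b *\<^sub>R y n) \<longlonglongrightarrow> 0"
    using approx_eig[OF R y1 lim] by (simp add: Rs_def b_def)
  have "compact (closure (K ` cball 0 1))" using K by (simp add: compact_op_def)
  then have sc: "seq_compact (closure (K ` cball 0 1))" by (rule compact_imp_seq_compact)
  have "\<forall>n. K (y n) \<in> closure (K ` cball 0 1)"
  proof
    fix n
    have "y n \<in> cball 0 1" using y1[of n] by simp
    then have "K (y n) \<in> K ` cball 0 1" by (rule imageI)
    then show "K (y n) \<in> closure (K ` cball 0 1)" by (rule subsetD[OF closure_subset])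
  qed
  then obtain l r where r: "strict_mono r" and Kl: "((\<lambda>n. K (y n)) \<circ> r) \<longlonglongrightarrow> l"
    by (rule seq_compactE[OF sc, where f="\<lambda>n. K (y n)"])
  define L where "L = (\<lambda>v. b *\<^sub>R v - Rs (R v - K v))"
  have "bounded_linear L" unfolding L_def
    by (rule bounded_linear_sub[OF bounded_linear_scaleR_right bounded_linear_compose[OF blS blD]])
  then have blL: "linear L" by (rule bounded_linear.linear)
  have Leq: "L v = Rs (K v) - (Rs (R v) - b *\<^sub>R v)" for v
    by (simp add: L_def Rs.diff)
  have "(\<lambda>n. L (y (r n))) \<longlonglongrightarrow> Rs l - 0"
    unfolding Leq
  proof (intro tendsto_diff)
    show "(\<lambda>n. Rs (K (y (r n)))) \<longlonglongrightarrow> Rs l" using Rs.tendsto[OF Kl] by (simp add: o_def)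
    show "(\<lambda>n. Rs (R (y (r n))) - b *\<^sub>R y (r n)) \<longlonglongrightarrow> 0"
      using LIMSEQ_subseq_LIMSEQ[OF app r] by (simp add: o_def)
  qed
  then have cu: "Cauchy (\<lambda>n. L (y (r n)))" by (rule LIMSEQ_imp_Cauchy)
  have Llow: "(b - onorm R * c) * norm v \<le> norm (L v)" for v
  proof -
    have "norm (Rs (R v - K v)) \<le> onorm Rs * norm (R v - K v)" by (rule onorm[OF blS])
    also have "\<dots> \<le> onorm R * norm (R v - K v)" using nS by (simp add: mult_right_mono)
    also have "\<dots> \<le> onorm R * (c * norm v)"
      using onorm[OF blD, of v] o0 by (simp add: c_def mult_left_mono)
    finally have "norm (Rs (R v - K v)) \<le> onorm R * c * norm v" by (simp add: mult.assoc)
    moreover have "b * norm v - norm (Rs (R v - K v)) \<le> norm (L v)"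
      unfolding L_def using norm_triangle_ineq2[of "b *\<^sub>R v" "Rs (R v - K v)"] o0
      by (simp add: b_def)
    ultimately show ?thesis by (simp add: algebra_simps)
  qed
  have "Cauchy (y \<circ> r)"
  proof (rule metric_CauchyI)
    fix e :: real assume e: "0 < e"
    have ee: "0 < e * (b - onorm R * c)" using e db by simp
    obtain M where M: "\<And>m n. m \<ge> M \<Longrightarrow> n \<ge> M \<Longrightarrow> dist (L (y (r m))) (L (y (r n))) < e * (b - onorm R * c)"
      using metric_CauchyD[OF cu ee] by blast
    show "\<exists>M. \<forall>m\<ge>M. \<forall>n\<ge>M. dist ((y \<circ> r) m) ((y \<circ> r) n) < e"
    proof (intro exI allI impI)
      fix m n assume mn: "M \<le> m" "M \<le> n"
      have "(b - onorm R * c) * norm (y (r m) - y (r n)) \<le> norm (L (y (r m) - y (r n)))" by (rule Llow)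
      also have "\<dots> = dist (L (y (r m))) (L (y (r n)))"
        by (simp add: dist_norm linear_diff[OF blL])
      also have "\<dots> < e * (b - onorm R * c)" using M[OF mn] .
      finally have "norm (y (r m) - y (r n)) < e" using db by (simp add: mult.commute)
      then show "dist ((y \<circ> r) m) ((y \<circ> r) n) < e" by (simp add: dist_norm)
    qed
  qed
  then obtain x where "(y \<circ> r) \<longlonglongrightarrow> x" using Cauchy_convergent_iff convergent_def by blast
  then show ?thesis using r by blast
qed

lemma bounded_clinear_comp:
  assumes "bounded_clinear f" "bounded_clinear g"
  shows "bounded_clinear (f \<circ> g)"
  using assms unfolding bounded_clinear_def clinear_def
  by (auto intro: bounded_linear_compose simp: o_def)

lemma compact_op_zero: "compact_op (\<lambda>x::'a::complex_inner. 0)"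
proof -
  have "bounded_clinear (\<lambda>x::'a. 0)"
    unfolding bounded_clinear_def clinear_def by (simp add: bounded_linear_zero)
  moreover have "(\<lambda>x::'a. 0) ` cball 0 1 = {0::'a}"
  proof
    show "{0::'a} \<subseteq> (\<lambda>x::'a. 0) ` cball 0 1" using imageI[of "0::'a" "cball 0 1" "\<lambda>x. 0"] by simp
  qed auto
  ultimately show ?thesis unfolding compact_op_def by simp
qed

lemma dist_compact_less:
  fixes S :: "'a::complex_inner \<Rightarrow> 'a"
  assumes "dist_compact S < z"
  shows "\<exists>K. compact_op K \<and> onorm (\<lambda>x. S x - K x) < z"
proof -
  have "{onorm (\<lambda>x. S x - K x) | K. compact_op K} \<noteq> {}" using compact_op_zero by blast
  from cInf_lessD[OF this] assms show ?thesis unfolding dist_compact_def by blast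
qed

lemma norm_lim_transfer:
  fixes f g :: "nat \<Rightarrow> 'a::real_normed_vector"
  assumes "(\<lambda>n. f n - g n) \<longlonglongrightarrow> 0" "(\<lambda>n. norm (g n)) \<longlonglongrightarrow> L"
  shows "(\<lambda>n. norm (f n)) \<longlonglongrightarrow> L"
proof -
  have "(\<lambda>n. norm (f n) - norm (g n)) \<longlonglongrightarrow> 0"
  proof (rule Lim_null_comparison)
    show "\<forall>\<^sub>F n in sequentially. norm (norm (f n) - norm (g n)) \<le> norm (f n - g n)"
      by (simp add: norm_triangle_ineq3)
    show "(\<lambda>n. norm (f n - g n)) \<longlonglongrightarrow> 0" using assms(1) by (simp add: tendsto_norm_zero)
  qed
  from tendsto_add[OF this assms(2)] show ?thesis by simp
qed

theorem corollary2p9: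
  fixes T :: "'a::chilbert_space \<Rightarrow> 'a"
  assumes "bounded_clinear T"
  shows "onorm (\<lambda>x. T x + T (cadjoint T (T x))) = onorm T + onorm T ^ 3 \<and>
    (T \<noteq> (\<lambda>x. 0) \<and>
         (dist_compact T < onorm T \<or>
          dist_compact (T \<circ> cadjoint T \<circ> T) < onorm (T \<circ> cadjoint T \<circ> T)) \<longrightarrow>
         (\<exists>xo. norm xo = 1 \<and>
           scaleR (1 / onorm T) (T xo) =
             scaleR (1 / onorm (T \<circ> cadjoint T \<circ> T)) ((T \<circ> cadjoint T \<circ> T) xo) \<and>
           norm (T xo) = onorm T \<and>
           norm ((T \<circ> cadjoint T \<circ> T) xo) = onorm (T \<circ> cadjoint T \<circ> T)))"
proof -
  note T = assms
  define Ts where "Ts = cadjoint T"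
  define S where "S = T \<circ> Ts \<circ> T"
  define P where "P = (\<lambda>x. T x + T (Ts (T x)))"
  define nT where "nT = onorm T"
  define a where "a = nT^2"
  have bl: "bounded_linear T" using T by (simp add: bounded_clinear_def)
  interpret T: bounded_linear T by fact
  have cTs: "bounded_clinear Ts" and nTs: "onorm Ts \<le> nT"
    using cadjoint_bounded[OF T] by (auto simp: Ts_def nT_def)
  have blTs: "bounded_linear Ts" using cTs by (simp add: bounded_clinear_def)
  interpret Ts: bounded_linear Ts by fact
  have adj: "\<And>x y. cinner (T x) y = cinner x (Ts y)" unfolding Ts_def by (rule cadjoint_prop[OF T])
  have cS: "bounded_clinear S" unfolding S_def by (intro bounded_clinear_comp T cTs)
  have blS: "bounded_linear S" using cS by (simp add: bounded_clinear_def)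
  have Sx: "S x = T (Ts (T x))" for x by (simp add: S_def)
  have blP: "bounded_linear P" unfolding P_def
    by (rule bounded_linear_add[OF bl bounded_linear_compose[OF bl bounded_linear_compose[OF blTs bl]]])
  have nT0: "0 \<le> nT" unfolding nT_def by (rule onorm_pos_le[OF bl])
  have a0: "0 \<le> a" by (simp add: a_def)
  have TsT: "norm (Ts (T x)) \<le> a * norm x" for x
  proof -
    have "norm (Ts (T x)) \<le> onorm Ts * norm (T x)" by (rule onorm[OF blTs])
    also have "\<dots> \<le> nT * (nT * norm x)"
      using nTs onorm[OF bl, of x] nT0 by (auto simp: nT_def intro: mult_mono)
    finally show ?thesis by (simp add: a_def power2_eq_square mult.assoc)
  qed
  have TTsT: "norm (T (Ts (T x))) \<le> nT * a * norm x" for x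
  proof -
    have "norm (T (Ts (T x))) \<le> nT * norm (Ts (T x))" using onorm[OF bl] by (simp add: nT_def)
    also have "\<dots> \<le> nT * (a * norm x)" using TsT nT0 by (simp add: mult_left_mono)
    finally show ?thesis by (simp add: mult.assoc)
  qed
  have upS: "onorm S \<le> nT * a"
  proof (rule onorm_bound)
    show "0 \<le> nT * a" using nT0 a0 by simp
    show "norm (S x) \<le> nT * a * norm x" for x using TTsT by (simp add: Sx)
  qed
  have upP: "onorm P \<le> nT + nT * a"
  proof (rule onorm_bound)
    show "0 \<le> nT + nT * a" using nT0 a0 by simp
    fix x
    have "norm (P x) \<le> norm (T x) + norm (T (Ts (T x)))" unfolding P_def by (rule norm_triangle_ineq)
    also have "\<dots> \<le> nT * norm x + nT * a * norm x"
      using onorm[OF bl, of x] TTsT[of x] by (simp add: nT_def)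
    finally show "norm (P x) \<le> (nT + nT * a) * norm x" by (simp add: algebra_simps)
  qed
  have na3: "nT * a = nT ^ 3" by (simp add: a_def power3_eq_cube power2_eq_square)
  show ?thesis
  proof (cases "nT = 0")
    case True
    then have T0: "\<And>x. T x = 0" using onorm_eq_0[OF bl] by (simp add: nT_def)
    have "onorm P = 0" using upP onorm_pos_le[OF blP] True by simp
    then have "onorm P = nT + nT ^ 3" using True by simp
    moreover have "T = (\<lambda>x. 0)" using T0 by auto
    ultimately show ?thesis by (simp add: P_def Ts_def nT_def)
  next
    case False
    then have nTp: "0 < nT" using nT0 by simp
    obtain xs where xs1: "\<And>n. norm (xs n) = 1" and xlim: "(\<lambda>n. norm (T (xs n))) \<longlonglongrightarrow> nT"
      using norm_approx_seq[OF bl] nTp by (auto simp: nT_def)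
    have app: "(\<lambda>n. Ts (T (xs n)) - a *\<^sub>R xs n) \<longlonglongrightarrow> 0"
      using approx_eig[OF T xs1] xlim by (simp add: Ts_def a_def nT_def)
    have app2: "(\<lambda>n. T (Ts (T (xs n))) - a *\<^sub>R T (xs n)) \<longlonglongrightarrow> 0"
      using T.tendsto[OF app] by (simp add: T.diff T.scaleR)
    have "(\<lambda>n. norm (a *\<^sub>R T (xs n))) \<longlonglongrightarrow> a * nT"
      using tendsto_mult[OF tendsto_const[of a] xlim] a0 by simp
    then have Slim0: "(\<lambda>n. norm (S (xs n))) \<longlonglongrightarrow> a * nT"
      using norm_lim_transfer[OF app2] by (simp add: Sx)
    have "a * nT \<le> onorm S"
    proof (rule tendsto_le[OF _ _ Slim0])
      show "(\<lambda>n. onorm S) \<longlonglongrightarrow> onorm S" by simp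
      show "\<forall>\<^sub>F n in sequentially. norm (S (xs n)) \<le> onorm S"
        using onorm[OF blS] xs1 by (intro always_eventually allI) (metis mult.right_neutral)
    qed simp
    then have nS: "onorm S = nT * a" using upS by (simp add: mult.commute)
    have Slim: "(\<lambda>n. norm (S (xs n))) \<longlonglongrightarrow> onorm S" using Slim0 nS by (simp add: mult.commute)
    have "(\<lambda>n. norm ((1 + a) *\<^sub>R T (xs n))) \<longlonglongrightarrow> (1 + a) * nT"
      using tendsto_mult[OF tendsto_const[of "1+a"] xlim] a0 by simp
    moreover have "(\<lambda>n. P (xs n) - (1 + a) *\<^sub>R T (xs n)) \<longlonglongrightarrow> 0"
      using app2 by (simp add: P_def algebra_simps)
    ultimately have Plim: "(\<lambda>n. norm (P (xs n))) \<longlonglongrightarrow> (1 + a) * nT"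
      by (rule norm_lim_transfer[rotated])
    have "(1 + a) * nT \<le> onorm P"
    proof (rule tendsto_le[OF _ _ Plim])
      show "(\<lambda>n. onorm P) \<longlonglongrightarrow> onorm P" by simp
      show "\<forall>\<^sub>F n in sequentially. norm (P (xs n)) \<le> onorm P"
        using onorm[OF blP] xs1 by (intro always_eventually allI) (metis mult.right_neutral)
    qed simp
    then have part1: "onorm P = nT + nT ^ 3" using upP na3 by (simp add: algebra_simps)
    have part2: "\<exists>xo. norm xo = 1 \<and>
           scaleR (1 / nT) (T xo) = scaleR (1 / onorm S) (S xo) \<and>
           norm (T xo) = nT \<and> norm (S xo) = onorm S"
      if hyp: "dist_compact T < nT \<or> dist_compact S < onorm S"
    proof -
      have "\<exists>x r. strict_mono r \<and> (xs \<circ> r) \<longlonglongrightarrow> x"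
      proof (cases "dist_compact T < nT")
        case True
        then obtain K where K: "compact_op K" "onorm (\<lambda>x. T x - K x) < onorm T"
          using dist_compact_less by (metis nT_def)
        show ?thesis by (rule conv_sub[OF T K xs1 xlim[unfolded nT_def]])
      next
        case False
        then have "dist_compact S < onorm S" using hyp by simp
        then obtain K where K: "compact_op K" "onorm (\<lambda>x. S x - K x) < onorm S"
          using dist_compact_less by metis
        show ?thesis by (rule conv_sub[OF cS K xs1 Slim])
      qed
      then obtain x r where r: "strict_mono r" and xr: "(xs \<circ> r) \<longlonglongrightarrow> x" by blast
      have "(\<lambda>n. norm ((xs \<circ> r) n)) \<longlonglongrightarrow> norm x" by (rule tendsto_norm[OF xr])
      then have x1: "norm x = 1" using xs1 LIMSEQ_unique[OF _ tendsto_const[of 1]] by (simp add: o_def)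
      have "(\<lambda>n. Ts (T ((xs \<circ> r) n)) - a *\<^sub>R (xs \<circ> r) n) \<longlonglongrightarrow> Ts (T x) - a *\<^sub>R x"
        by (intro tendsto_diff tendsto_scaleR tendsto_const Ts.tendsto T.tendsto xr)
      moreover have "(\<lambda>n. Ts (T ((xs \<circ> r) n)) - a *\<^sub>R (xs \<circ> r) n) \<longlonglongrightarrow> 0"
        using LIMSEQ_subseq_LIMSEQ[OF app r] by (simp add: o_def)
      ultimately have "Ts (T x) - a *\<^sub>R x = 0" by (rule LIMSEQ_unique)
      then have eig: "Ts (T x) = a *\<^sub>R x" by simp
      have "(norm (T x))^2 = Re (cinner x (Ts (T x)))" by (simp add: adj[symmetric] norm_sq)
      also have "\<dots> = a * (norm x)^2" by (simp add: eig cinner_scaleR_right norm_sq)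
      finally have "(norm (T x))^2 = nT^2" using x1 by (simp add: a_def)
      then have nTx: "norm (T x) = nT" using nT0 by (simp add: power2_eq_imp_eq)
      have Sxe: "S x = a *\<^sub>R T x" by (simp add: Sx eig T.scaleR)
      have nSx: "norm (S x) = onorm S" using nTx a0 by (simp add: Sxe nS mult.commute)
      have "scaleR (1 / onorm S) (S x) = scaleR (1 / nT) (T x)"
        using nTp False by (simp add: Sxe nS a_def power2_eq_square)
      then show ?thesis using x1 nTx nSx by metis
    qed
    show ?thesis
      using part1 part2 unfolding P_def S_def Ts_def nT_def by blast
  qed
qed


end
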